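(* Let $\mu\in[-1/3,0]$ and $P\in[0,1]$, and for $\Gamma\in[0,1)$ set \[ B_G^{(2)}(\Gamma):=[-4\Gamma P+2P-2\Gamma+3]+\mu[3-2\Gamma-4P]. \] Then there exists a real number $c<1/2$ such that $B_G^{(2)}(\Gamma)<0$ for every $\Gamma\in[0,1)$ with $\Gamma-\tfrac12>c$, if and only if \[ 1-P<\frac{1+3\mu}{2+4\mu}. \]
   Context: In the application, $\Gamma=\Gamma(k)$ is the fraction of the potential enstrophy spectrum at wavenumber $k$ contained in the upper layer, $P=P(k)$ is the fraction of the energy spectrum at $k$ that is baroclinic, and $\mu\in[-1/3,0]$ is the Ekman extrapolation parameter; $B_G^{(2)}$ is a coefficient in the potential enstrophy dissipation rate spectrum of the asymmetric Ekman term. *)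

theory Defs
  imports Complex_Main
begin

definition B_G2 :: "real \<Rightarrow> real \<Rightarrow> real \<Rightarrow> real" where
  "B_G2 \<mu> P \<Gamma> = (-4*\<Gamma>*P + 2*P - 2*\<Gamma> + 3) + \<mu> * (3 - 2*\<Gamma> - 4*P)"

end

theory Submission
  imports Defs
begin

theorem proposition6:
  fixes \<mu> P :: real
  assumes "-1/3 \<le> \<mu>" and "\<mu> \<le> 0" and "0 \<le> P" and "P \<le> 1"
  shows "(\<exists>c::real. c < 1/2 \<and>
            (\<forall>\<Gamma>::real. 0 \<le> \<Gamma> \<and> \<Gamma> < 1 \<and> \<Gamma> - 1/2 > c \<longrightarrow> B_G2 \<mu> P \<Gamma> < 0))
         \<longleftrightarrow> 1 - P < (1 + 3*\<mu>) / (2 + 4*\<mu>)"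
proof -
  define s where "s = 4*P + 2 + 2*\<mu>"
  define b1 where "b1 = 1 + \<mu> - 2*P - 4*\<mu>*P"
  have hmp: "\<mu>*P \<ge> -1/3" using assms
  proof -
    have "\<mu>*(P-1) \<ge> 0" using assms by (intro mult_nonpos_nonpos) auto
    then show ?thesis using assms by (simp add: algebra_simps)
  qed
  have s0: "s > 0" using assms hmp unfolding s_def by linarith
  have B: "\<And>G. B_G2 \<mu> P G = b1 + s*(1-G)"
    unfolding B_G2_def s_def b1_def by (simp add: algebra_simps)
  have d: "2 + 4*\<mu> > 0" using assms by linarith
  have R: "(1 - P < (1 + 3*\<mu>) / (2 + 4*\<mu>)) \<longleftrightarrow> b1 < 0"
  proof -
    have "(1 - P < (1 + 3*\<mu>) / (2 + 4*\<mu>)) \<longleftrightarrow> (1 - P)*(2 + 4*\<mu>) < 1 + 3*\<mu>"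
      using d by (simp add: pos_less_divide_eq)
    also have "\<dots> \<longleftrightarrow> b1 < 0" unfolding b1_def by (simp add: algebra_simps)
    finally show ?thesis .
  qed
  show ?thesis unfolding R
  proof
    assume "\<exists>c. c < 1/2 \<and> (\<forall>\<Gamma>. 0 \<le> \<Gamma> \<and> \<Gamma> < 1 \<and> \<Gamma> - 1/2 > c \<longrightarrow> B_G2 \<mu> P \<Gamma> < 0)"
    then obtain c where c: "c < 1/2" and h: "\<And>\<Gamma>. 0 \<le> \<Gamma> \<and> \<Gamma> < 1 \<and> \<Gamma> - 1/2 > c \<Longrightarrow> B_G2 \<mu> P \<Gamma> < 0" by blast
    define G where "G = max 0 ((c + 3/2)/2)"
    have "B_G2 \<mu> P G < 0" using c by (intro h) (auto simp: G_def max_def field_simps)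
    moreover have "G < 1" using c by (auto simp: G_def)
    moreover have "s*(1-G) > 0" using s0 \<open>G < 1\<close> by simp
    ultimately show "b1 < 0" using B[of G] by linarith
  next
    assume b: "b1 < 0"
    show "\<exists>c. c < 1/2 \<and> (\<forall>\<Gamma>. 0 \<le> \<Gamma> \<and> \<Gamma> < 1 \<and> \<Gamma> - 1/2 > c \<longrightarrow> B_G2 \<mu> P \<Gamma> < 0)"
    proof (intro exI[of _ "1/2 + b1/s"] conjI allI impI)
      show "1/2 + b1/s < 1/2" using b s0 by (simp add: divide_neg_pos)
    next
      fix G assume "0 \<le> G \<and> G < 1 \<and> G - 1/2 > 1/2 + b1/s"
      then have "1 - G < - b1/s" by simp
      then have "1 - G < (-b1)/s" by simp
      then have "(1-G)*s < -b1" using s0 by (simp only: pos_less_divide_eq)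
      then have "s*(1-G) < -b1" by (simp add: mult.commute)
      then show "B_G2 \<mu> P G < 0" using B[of G] by simp
    qed
  qed
qed

end
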